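(* Setting: $n$ agents on a connected, undirected weighted graph $\mathcal G$ with symmetric adjacency weights $a_{i,j}$ and Laplacian $L_n$; $L=L_n\otimes I_m$. For each $i$, $\Omega_i\subset\mathbb R^{q_i}$ is closed and convex, $f^i$ is strictly convex on an open set containing $\Omega_i$, $W_i\in\mathbb R^{m\times q_i}$, $d_i\in\mathbb R^m$, $\sum_i d_i=d_0$; $\Omega=\prod_i\Omega_i$, $f(x)=\sum_if^i(x_i)$, $W=[W_1,\dots,W_n]$, $\overline W=\mathrm{diag}\{W_1,\dots,W_n\}$, $d=[d_1^{\rm T},\dots,d_n^{\rm T}]^{\rm T}$; Slater's condition holds (some $x$ in the interior of $\Omega$ has $Wx=d_0$). Let $\mathcal F$ be the set-valued map $$\mathcal F(y,\lambda,z)=\Big\{\big(-y+x-g+\overline W^{\rm T}\lambda,\ d-\overline Wx-L\lambda-Lz,\ L\lambda\big):\ g\in\partial f(x),\ x=P_\Omega(y)\Big\}.$$ Let $x^*$ be the solution of $\min f(x)$ s.t. $Wx=d_0$, $x\in\Omega$, and let $(y^*,\lambda^*,z^* )$ be an equilibrium of $\dot\xi\in\mathcal F(\xi)$ (i.e. $0\in\mathcal F(y^*,\lambda^*,z^* )$) with $x^*=P_\Omega(y^* )$. Define $$V(y,\lambda,z)=\tfrac12\big(\|y-P_\Omega(y^* )\|^2-\|y-P_\Omega(y)\|^2\big)+\tfrac12\|\lambda-\lambda^*\|^2+\tfrac12\|z-z^*\|^2.$$ If $a\in\mathcal L_{\mathcal F}V(y,\lambda,z)$, then there exist $g(x)\in\partial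 f(x)$ and $g(x^* )\in\partial f(x^* )$, with $x=P_\Omega(y)$, such that $$a\le -(x-x^* )^{\rm T}(g(x)-g(x^* ))-\lambda^{\rm T}L\lambda\le 0.$$
   Context: $\partial f$ is the convex subdifferential; $P_\Omega$ the Euclidean projection onto $\Omega$. For a locally Lipschitz $V$ with Clarke generalized gradient $\partial V$, the set-valued Lie derivative is $\mathcal L_{\mathcal F}V(\xi)=\{a\in\mathbb R:\ \exists v\in\mathcal F(\xi)\text{ with } p^{\rm T}v=a\ \forall p\in\partial V(\xi)\}$. *)

theory Defs
  imports "HOL-Analysis.Analysis" "HOL-Library.Liminf_Limsup"
begin

text \<open>Strict convexity on a set (following the library convention for convex_on,
  the set is required to be convex).\<close>
definition strict_convex_on :: "'a::real_vector set \<Rightarrow> ('a \<Rightarrow> real) \<Rightarrow> bool" where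
  "strict_convex_on S f \<longleftrightarrow> convex S \<and>
     (\<forall>x\<in>S. \<forall>y\<in>S. x \<noteq> y \<longrightarrow> (\<forall>t. 0 < t \<and> t < 1 \<longrightarrow>
        f ((1 - t) *\<^sub>R x + t *\<^sub>R y) < (1 - t) * f x + t * f y))"

definition subdiff :: "('a::real_inner \<Rightarrow> real) \<Rightarrow> 'a set \<Rightarrow> 'a \<Rightarrow> 'a set" where
  "subdiff f D x = {g. \<forall>y\<in>D. f y \<ge> f x + inner g (y - x)}"

definition clarke_dir :: "('a::real_normed_vector \<Rightarrow> real) \<Rightarrow> 'a \<Rightarrow> 'a \<Rightarrow> ereal" where
  "clarke_dir V \<xi> v = Limsup (at \<xi> \<times>\<^sub>F at_right (0::real))
      (\<lambda>(\<eta>, t). ereal ((V (\<eta> + t *\<^sub>R v) - V \<eta>) / t))"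

definition clarke_grad :: "('a::real_inner \<Rightarrow> real) \<Rightarrow> 'a \<Rightarrow> 'a set" where
  "clarke_grad V \<xi> = {p. \<forall>v. ereal (inner p v) \<le> clarke_dir V \<xi> v}"

definition set_lie_deriv :: "('a::real_inner \<Rightarrow> 'a set) \<Rightarrow> ('a \<Rightarrow> real) \<Rightarrow> 'a \<Rightarrow> real set" where
  "set_lie_deriv F V \<xi> = {a. \<exists>v\<in>F \<xi>. \<forall>p\<in>clarke_grad V \<xi>. inner p v = a}"

text \<open>Block structure: the coordinates of the decision vector x (type 'k) are
  partitioned into agent blocks via blk; x_i corresponds to blockp blk i x,
  which lives in the coordinate subspace block_space blk i (isometric to R^{q_i}).\<close>
definition blockp :: "('k::finite \<Rightarrow> 'n) \<Rightarrow> 'n \<Rightarrow> real^'k \<Rightarrow> real^'k" where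
  "blockp blk i x = (\<chi> k. if blk k = i then x $ k else 0)"

definition block_space :: "('k::finite \<Rightarrow> 'n) \<Rightarrow> 'n \<Rightarrow> (real^'k) set" where
  "block_space blk i = {v. \<forall>k. blk k \<noteq> i \<longrightarrow> v $ k = 0}"

definition prod_set :: "('k::finite \<Rightarrow> 'n::finite) \<Rightarrow> ('n \<Rightarrow> (real^'k) set) \<Rightarrow> (real^'k) set" where
  "prod_set blk Om = {x. \<forall>i. blockp blk i x \<in> Om i}"

definition sep_fun :: "('k::finite \<Rightarrow> 'n::finite) \<Rightarrow> ('n \<Rightarrow> real^'k \<Rightarrow> real) \<Rightarrow> real^'k \<Rightarrow> real" where
  "sep_fun blk fi x = (\<Sum>i\<in>UNIV. fi i (blockp blk i x))"

text \<open>W = [W_1,...,W_n] is a single m x (sum q_i) matrix; Wbar = diag(W_1,...,W_n).\<close>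
definition Wbar :: "real^'k^'m \<Rightarrow> ('k::finite \<Rightarrow> 'n::finite) \<Rightarrow> real^'k \<Rightarrow> real^'m^'n" where
  "Wbar W blk x = (\<chi> i. W *v blockp blk i x)"

definition WbarT :: "real^'k^'m \<Rightarrow> ('k::finite \<Rightarrow> 'n::finite) \<Rightarrow> real^'m^'n \<Rightarrow> real^'k" where
  "WbarT W blk lam = (\<chi> k. (transpose W *v (lam $ blk k)) $ k)"

text \<open>Graph Laplacian L_n = D - A of symmetric weights a, and L = L_n (x) I_m.\<close>
definition laplacian :: "('n::finite \<Rightarrow> 'n \<Rightarrow> real) \<Rightarrow> real^'n^'n" where
  "laplacian a = (\<chi> i j. if i = j then (\<Sum>k\<in>UNIV - {i}. a i k) else - a i j)"

definition Lkron :: "('n::finite \<Rightarrow> 'n \<Rightarrow> real) \<Rightarrow> real^'m^'n \<Rightarrow> real^'m^'n" where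
  "Lkron a lam = (\<chi> i. \<Sum>j\<in>UNIV. (laplacian a $ i $ j) *\<^sub>R (lam $ j))"

definition connected_graph :: "('n \<Rightarrow> 'n \<Rightarrow> real) \<Rightarrow> bool" where
  "connected_graph a \<longleftrightarrow> (\<forall>i j. (i, j) \<in> {(u, v). a u v > 0}\<^sup>*)"

definition Fmap :: "('n::finite \<Rightarrow> 'n \<Rightarrow> real) \<Rightarrow> ('k::finite \<Rightarrow> 'n) \<Rightarrow> real^'k^'m
     \<Rightarrow> real^'m^'n \<Rightarrow> (real^'k) set \<Rightarrow> (real^'k \<Rightarrow> real) \<Rightarrow> (real^'k) set
     \<Rightarrow> (real^'k) \<times> (real^'m^'n) \<times> (real^'m^'n) \<Rightarrow> ((real^'k) \<times> (real^'m^'n) \<times> (real^'m^'n)) set" where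
  "Fmap a blk W d Om f D \<xi> =
     (case \<xi> of (y, lam, z) \<Rightarrow>
       (let x = closest_point Om y in
         {(- y + x - g + WbarT W blk lam, d - Wbar W blk x - Lkron a lam - Lkron a z, Lkron a lam)
          | g. g \<in> subdiff f D x}))"

definition Vfun :: "(real^'k::finite) set \<Rightarrow> real^'k \<Rightarrow> real^'m::finite^'n::finite \<Rightarrow> real^'m^'n
     \<Rightarrow> (real^'k) \<times> (real^'m^'n) \<times> (real^'m^'n) \<Rightarrow> real" where
  "Vfun Om ys lams zs \<xi> =
     (case \<xi> of (y, lam, z) \<Rightarrow>
        (1/2) * ((norm (y - closest_point Om ys))\<^sup>2 - (norm (y - closest_point Om y))\<^sup>2)
        + (1/2) * (norm (lam - lams))\<^sup>2 + (1/2) * (norm (z - zs))\<^sup>2)"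

end

theory Submission imports Defs begin
lemma if_times0: "(if P then (x::real) else 0) * y = (if P then x*y else 0)" by simp
lemma lap_sym: "(\<And>i j. a i j = a j i) \<Longrightarrow> laplacian a $ i $ j = laplacian a $ j $ i"
  by (simp add: laplacian_def)
lemma Lform: "inner \<mu> (Lkron a \<nu>) = (\<Sum>i\<in>UNIV. \<Sum>j\<in>UNIV. laplacian a $ i $ j * inner (\<mu>$i) (\<nu>$j))"
  apply (subst inner_vec_def)
  by (simp add: Lkron_def inner_sum_right)
lemma Lsym: assumes "\<And>i j. a i j = a j i"
  shows "inner \<mu> (Lkron a \<nu>) = inner \<nu> (Lkron a \<mu>)"
  unfolding Lform
  apply (subst sum.swap)
  by (simp add: lap_sym[OF assms] inner_commute)
lemma Wadj: "inner x (WbarT W blk \<mu>) = inner (Wbar W blk x) \<mu>"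
proof -
  have e: "Wbar W blk x $ i $ m = (\<Sum>k\<in>UNIV. (if blk k = i then W$m$k * x$k else 0))" for i m
    by (simp add: Wbar_def blockp_def matrix_vector_mult_def if_distrib cong: if_cong)
  have "inner (Wbar W blk x) \<mu> = (\<Sum>i\<in>UNIV. \<Sum>m\<in>UNIV. (\<Sum>k\<in>UNIV. (if blk k = i then W$m$k * x$k else 0)) * \<mu>$i$m)"
    by (simp add: inner_vec_def e)
  also have "\<dots> = (\<Sum>i\<in>UNIV. \<Sum>m\<in>UNIV. \<Sum>k\<in>UNIV. (if blk k = i then W$m$k * x$k * \<mu>$i$m else 0))"
    by (auto simp: sum_distrib_right intro!: sum.cong)
  also have "\<dots> = (\<Sum>k\<in>UNIV. \<Sum>m\<in>UNIV. \<Sum>i\<in>UNIV. (if blk k = i then W$m$k * x$k * \<mu>$i$m else 0))"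
    apply (subst sum.swap) apply (subst (2) sum.swap) apply (subst sum.swap) ..
  also have "\<dots> = (\<Sum>k\<in>UNIV. \<Sum>m\<in>UNIV. W$m$k * x$k * \<mu>$(blk k)$m)"
    by (simp add: sum.delta)
  also have "\<dots> = inner x (WbarT W blk \<mu>)"
    by (simp add: WbarT_def inner_vec_def matrix_vector_mult_def transpose_def sum_distrib_left mult.commute mult.left_commute)
  finally show ?thesis by simp
qed
lemma Lpsd: assumes sym: "\<And>i j. a i j = a j i" and nn: "\<And>i j. a i j \<ge> 0"
  shows "inner l (Lkron a l) \<ge> 0"
proof -
  define c where "c i j = inner (l$i) (l$j)" for i j
  have lap: "laplacian a $ i $ j = (if i = j then (\<Sum>k\<in>UNIV. a i k) else 0) - a i j" for i j
    by (simp add: laplacian_def sum_diff1)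
  have q: "inner l (Lkron a l) = (\<Sum>i\<in>UNIV. (\<Sum>k\<in>UNIV. a i k) * c i i) - (\<Sum>i\<in>UNIV. \<Sum>j\<in>UNIV. a i j * c i j)"
    unfolding Lform lap c_def by (simp add: left_diff_distrib sum_subtractf if_times0 sum.delta)
  have s1: "(\<Sum>i\<in>UNIV. \<Sum>j\<in>UNIV. a i j * c j j) = (\<Sum>i\<in>UNIV. (\<Sum>k\<in>UNIV. a i k) * c i i)"
    apply (subst sum.swap) by (simp add: sym sum_distrib_right)
  have s0: "(\<Sum>i\<in>UNIV. \<Sum>j\<in>UNIV. a i j * c i i) = (\<Sum>i\<in>UNIV. (\<Sum>k\<in>UNIV. a i k) * c i i)"
    by (simp add: sum_distrib_right)
  have nrm: "(norm (l$i - l$j))\<^sup>2 = c i i + c j j - 2 * c i j" for i j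
    by (simp add: c_def power2_norm_eq_inner inner_diff_left inner_diff_right inner_commute)
  have "0 \<le> (\<Sum>i\<in>UNIV. \<Sum>j\<in>UNIV. a i j * (norm (l$i - l$j))\<^sup>2)"
    by (intro sum_nonneg mult_nonneg_nonneg nn) simp
  also have "\<dots> = (\<Sum>i\<in>UNIV. \<Sum>j\<in>UNIV. a i j * c i i) + (\<Sum>i\<in>UNIV. \<Sum>j\<in>UNIV. a i j * c j j) - 2 * (\<Sum>i\<in>UNIV. \<Sum>j\<in>UNIV. a i j * c i j)"
    by (simp add: nrm algebra_simps sum.distrib sum_subtractf sum_distrib_left)
  finally show ?thesis using q s0 s1 by linarith
qed

lemma nsq: "(norm (x + t *\<^sub>R b))\<^sup>2 = (norm x)\<^sup>2 + 2 * t * inner x b + t\<^sup>2 * (norm b)\<^sup>2"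
  unfolding power2_norm_eq_inner by (simp add: inner_add_left inner_add_right inner_commute power2_eq_square algebra_simps)

lemma clarke_main:
  fixes S :: "(real^'k::finite) set" and ys y :: "real^'k" and lams zs lam z :: "real^'m::finite^'n::finite"
  assumes cvx: "convex S" and cl: "closed S" and ne: "S \<noteq> {}"
  shows "(closest_point S y - closest_point S ys, lam - lams, z - zs) \<in> clarke_grad (Vfun S ys lams zs) (y, lam, z)"
  unfolding clarke_grad_def
proof (intro CollectI allI)
  fix v :: "(real^'k) \<times> (real^'m^'n) \<times> (real^'m^'n)"
  obtain vy vl vz where v: "v = (vy, vl, vz)" by (cases v) auto
  define c where "c = closest_point S ys"
  define V where "V = Vfun S ys lams zs"
  define \<xi> where "\<xi> = (y, lam, z)"
  define F where "F = at \<xi> \<times>\<^sub>F at_right (0::real)"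
  define G where "G \<eta> = inner (closest_point S (fst \<eta>) - c, fst (snd \<eta>) - lams, snd (snd \<eta>) - zs) v" for \<eta> :: "(real^'k) \<times> (real^'m^'n) \<times> (real^'m^'n)"
  have A: "G \<eta> \<le> (V (\<eta> + t *\<^sub>R v) - V \<eta>) / t" if t: "t > 0" for \<eta> t
  proof -
    obtain y1 l1 z1 where eta: "\<eta> = (y1, l1, z1)" by (cases \<eta>) auto
    define u where "u = y1 + t *\<^sub>R vy"
    define p where "p = closest_point S y1"
    have pS: "p \<in> S" unfolding p_def using closest_point_in_set[OF cl ne] .
    have "dist u (closest_point S u) \<le> dist u p" using closest_point_le[OF cl pS] .
    then have "(norm (u - closest_point S u))\<^sup>2 \<le> (norm (u - p))\<^sup>2"
      by (simp add: dist_norm power_mono)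
    also have "u - p = (y1 - p) + t *\<^sub>R vy" by (simp add: u_def algebra_simps)
    finally have k: "(norm (u - closest_point S u))\<^sup>2 \<le> (norm (y1 - p))\<^sup>2 + 2 * t * inner (y1 - p) vy + t\<^sup>2 * (norm vy)\<^sup>2"
      by (simp add: nsq)
    have e1: "y1 + t *\<^sub>R vy - c = (y1 - c) + t *\<^sub>R vy" by (simp add: algebra_simps)
    have e2: "l1 + t *\<^sub>R vl - lams = (l1 - lams) + t *\<^sub>R vl" by (simp add: algebra_simps)
    have e3: "z1 + t *\<^sub>R vz - zs = (z1 - zs) + t *\<^sub>R vz" by (simp add: algebra_simps)
    have n1: "(norm (y1 + t *\<^sub>R vy - c))\<^sup>2 = (norm (y1 - c))\<^sup>2 + 2 * t * inner (y1 - c) vy + t\<^sup>2 * (norm vy)\<^sup>2"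
      unfolding e1 by (rule nsq)
    have n2: "(norm (l1 + t *\<^sub>R vl - lams))\<^sup>2 = (norm (l1 - lams))\<^sup>2 + 2 * t * inner (l1 - lams) vl + t\<^sup>2 * (norm vl)\<^sup>2"
      unfolding e2 by (rule nsq)
    have n3: "(norm (z1 + t *\<^sub>R vz - zs))\<^sup>2 = (norm (z1 - zs))\<^sup>2 + 2 * t * inner (z1 - zs) vz + t\<^sup>2 * (norm vz)\<^sup>2"
      unfolding e3 by (rule nsq)
    have VV: "V (\<eta> + t *\<^sub>R v) - V \<eta> = (1/2) * ((norm (y1 + t *\<^sub>R vy - c))\<^sup>2 - (norm (u - closest_point S u))\<^sup>2)
       + (1/2) * (norm (l1 + t *\<^sub>R vl - lams))\<^sup>2 + (1/2) * (norm (z1 + t *\<^sub>R vz - zs))\<^sup>2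
       - ((1/2) * ((norm (y1 - c))\<^sup>2 - (norm (y1 - p))\<^sup>2) + (1/2) * (norm (l1 - lams))\<^sup>2 + (1/2) * (norm (z1 - zs))\<^sup>2)"
      unfolding V_def Vfun_def eta v by (simp add: u_def p_def c_def)
    have Geq: "G \<eta> = inner (p - c) vy + inner (l1 - lams) vl + inner (z1 - zs) vz"
      by (simp add: G_def eta v p_def)
    have ip: "inner (p - c) vy = inner (y1 - c) vy - inner (y1 - p) vy" by (simp add: inner_diff_left)
    have sq: "0 \<le> t\<^sup>2 * (norm vl)\<^sup>2" "0 \<le> t\<^sup>2 * (norm vz)\<^sup>2" by auto
    have "t * G \<eta> \<le> V (\<eta> + t *\<^sub>R v) - V \<eta>"
      unfolding VV Geq n1 n2 n3 ip using k by (simp add: algebra_simps) (use sq in linarith)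
    then show ?thesis using t by (simp add: pos_le_divide_eq mult.commute)
  qed
  have Fnb: "F \<noteq> bot" by (simp add: F_def prod_filter_eq_bot)
  have t1: "(fst \<longlongrightarrow> \<xi>) F" using filterlim_fst[of "at \<xi>" "at_right (0::real)"] by (simp add: F_def filterlim_at)
  have t2: "((\<lambda>q. closest_point S (fst (fst q))) \<longlongrightarrow> closest_point S y) F"
    using isCont_tendsto_compose[OF continuous_at_closest_point[OF cvx cl ne] tendsto_fst[OF t1]]
    by (simp add: \<xi>_def)
  have t3: "((\<lambda>q. G (fst q)) \<longlongrightarrow> G \<xi>) F"
    using tendsto_fst[OF tendsto_snd[OF t1]] tendsto_snd[OF tendsto_snd[OF t1]]
    unfolding G_def using t1 t2 by (auto intro!: tendsto_intros simp: \<xi>_def)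
  have ev: "eventually (\<lambda>q. snd q > 0) F"
    unfolding F_def eventually_prod_filter
    by (intro exI[of _ "\<lambda>_. True"] exI[of _ "\<lambda>t. t > 0"]) (auto simp: eventually_at_right_less)
  have "ereal (G \<xi>) = Limsup F (\<lambda>q. ereal (G (fst q)))"
    by (rule lim_imp_Limsup[symmetric]) (use Fnb t3 in auto)
  also have "\<dots> \<le> Limsup F (\<lambda>(\<eta>, t). ereal ((V (\<eta> + t *\<^sub>R v) - V \<eta>) / t))"
    by (rule Limsup_mono) (use ev A in \<open>auto elim!: eventually_mono\<close>)
  finally show "ereal (inner (closest_point S y - closest_point S ys, lam - lams, z - zs) v) \<le> clarke_dir (Vfun S ys lams zs) (y, lam, z) v"
    by (simp add: clarke_dir_def F_def V_def \<xi>_def G_def c_def)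
qed

lemma blockp_linear: "linear (blockp blk i)"
  by (auto simp: linear_iff blockp_def vec_eq_iff algebra_simps)

lemma prod_set_closed_convex:
  assumes "\<And>i. closed (Om i)" "\<And>i. convex (Om i)"
  shows "closed (prod_set blk Om)" "convex (prod_set blk Om)"
proof -
  have eq: "prod_set blk Om = (\<Inter>i. blockp blk i -` Om i)" by (auto simp: prod_set_def)
  have c: "continuous (at x) (blockp blk i)" for i x
    by (rule linear_continuous_at) (simp add: blockp_linear linear_conv_bounded_linear[symmetric])
  show "closed (prod_set blk Om)" unfolding eq
    by (intro closed_INT ballI continuous_closed_vimage c assms(1))
  show "convex (prod_set blk Om)" unfolding eq
    by (intro convex_INT ballI convex_linear_vimage blockp_linear assms(2))
qed

theorem lemma6:
  fixes a :: "'n::finite \<Rightarrow> 'n \<Rightarrow> real"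
    and blk :: "'k::finite \<Rightarrow> 'n"
    and W :: "real^'k^'m::finite"
    and d :: "real^'m^'n"
    and Om :: "'n \<Rightarrow> (real^'k) set"
    and U :: "'n \<Rightarrow> (real^'k) set"
    and fi :: "'n \<Rightarrow> real^'k \<Rightarrow> real"
    and xs ys :: "real^'k"
    and lams zs :: "real^'m^'n"
    and y :: "real^'k" and lam z :: "real^'m^'n"
    and r :: real
  assumes sym: "\<And>i j. a i j = a j i"
    and nonneg: "\<And>i j. a i j \<ge> 0"
    and conn: "connected_graph a"
    and blocks_nonempty: "\<And>i. \<exists>k. blk k = i"
    and Om_sub: "\<And>i. Om i \<subseteq> block_space blk i"
    and Om_closed: "\<And>i. closed (Om i)"
    and Om_convex: "\<And>i. convex (Om i)"
    and U_open: "\<And>i. openin (top_of_set (block_space blk i)) (U i)"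
    and Om_U: "\<And>i. Om i \<subseteq> U i"
    and f_strict: "\<And>i. strict_convex_on (U i) (fi i)"
    and slater: "\<exists>x\<in>interior (prod_set blk Om). W *v x = (\<Sum>i\<in>UNIV. d $ i)"
    and xs_feas: "xs \<in> prod_set blk Om" "W *v xs = (\<Sum>i\<in>UNIV. d $ i)"
    and xs_opt: "\<And>x. x \<in> prod_set blk Om \<Longrightarrow> W *v x = (\<Sum>i\<in>UNIV. d $ i) \<Longrightarrow>
                   sep_fun blk fi xs \<le> sep_fun blk fi x"
    and equil: "0 \<in> Fmap a blk W d (prod_set blk Om) (sep_fun blk fi) (prod_set blk U) (ys, lams, zs)"
    and xs_proj: "xs = closest_point (prod_set blk Om) ys"
    and r_in: "r \<in> set_lie_deriv (Fmap a blk W d (prod_set blk Om) (sep_fun blk fi) (prod_set blk U))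
                 (Vfun (prod_set blk Om) ys lams zs) (y, lam, z)"
  shows "\<exists>gx \<in> subdiff (sep_fun blk fi) (prod_set blk U) (closest_point (prod_set blk Om) y).
         \<exists>gs \<in> subdiff (sep_fun blk fi) (prod_set blk U) xs.
           r \<le> - inner (closest_point (prod_set blk Om) y - xs) (gx - gs) - inner lam (Lkron a lam)
         \<and> - inner (closest_point (prod_set blk Om) y - xs) (gx - gs) - inner lam (Lkron a lam) \<le> 0"
proof -
  define S where "S = prod_set blk Om"
  define D where "D = prod_set blk U"
  define f where "f = sep_fun blk fi"
  define L :: "real^'m^'n \<Rightarrow> real^'m^'n" where "L = Lkron a"
  have cl: "closed S" and cvx: "convex S" unfolding S_def using prod_set_closed_convex Om_closed Om_convex by blast+
  have ne: "S \<noteq> {}" using xs_feas(1) S_def by auto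
  have SD: "S \<subseteq> D" using Om_U unfolding S_def D_def prod_set_def by blast
  have xsP: "closest_point S ys = xs" using xs_proj S_def by simp
  obtain gs where gs: "gs \<in> subdiff f D xs"
    and eq: "(0::(real^'k) \<times> (real^'m^'n) \<times> (real^'m^'n)) = (- ys + xs - gs + WbarT W blk lams, d - Wbar W blk xs - L lams - L zs, L lams)"
    using equil unfolding Fmap_def Let_def S_def[symmetric] D_def[symmetric] f_def[symmetric] L_def[symmetric]
    by (auto simp: xsP)
  have e1: "gs = - ys + xs + WbarT W blk lams" and e2: "d = Wbar W blk xs + L lams + L zs" and e3: "L lams = 0"
    using eq by (auto simp: zero_prod_def algebra_simps)
  define x where "x = closest_point S y"
  obtain vv where vv: "vv \<in> Fmap a blk W d S f D (y, lam, z)"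
    and hp: "\<forall>p\<in>clarke_grad (Vfun S ys lams zs) (y, lam, z). inner p vv = r"
    using r_in unfolding set_lie_deriv_def S_def D_def f_def by auto
  obtain g where g: "g \<in> subdiff f D x"
    and vveq: "vv = (- y + x - g + WbarT W blk lam, d - Wbar W blk x - L lam - L z, L lam)"
    using vv unfolding Fmap_def Let_def L_def by (auto simp: x_def)
  have "(closest_point S y - closest_point S ys, lam - lams, z - zs) \<in> clarke_grad (Vfun S ys lams zs) (y, lam, z)"
    by (rule clarke_main[OF cvx cl ne])
  then have r: "r = inner (x - xs, lam - lams, z - zs) vv"
    using hp xs_proj unfolding x_def S_def by auto
  have sy: "\<And>\<mu> \<nu>. inner \<mu> (L \<nu>) = inner \<nu> (L \<mu>)" unfolding L_def by (rule Lsym) (rule sym)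
  have req: "r = inner (x - xs) ((x - y) - (xs - ys)) - inner (x - xs) (g - gs) - inner lam (L lam)"
  proof -
    have W1: "inner x (WbarT W blk lam) = inner lam (Wbar W blk x)"
     and W2: "inner xs (WbarT W blk lam) = inner lam (Wbar W blk xs)"
     and W3: "inner x (WbarT W blk lams) = inner lams (Wbar W blk x)"
     and W4: "inner xs (WbarT W blk lams) = inner lams (Wbar W blk xs)" by (simp_all add: Wadj inner_commute)
    have L1: "inner lams (L lam) = 0" "inner lams (L z) = 0" "inner lams (L zs) = 0" "inner lam (L lams) = 0"
      "inner z (L lams) = 0" "inner zs (L lams) = 0" "inner lams (L lams) = 0"
      using sy e3 by (metis inner_zero_right)+
    have L2: "inner z (L lam) = inner lam (L z)" "inner zs (L lam) = inner lam (L zs)" using sy by blast+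
    have r1: "r = inner (x - xs) (- y + x - g + WbarT W blk lam) + inner (lam - lams) (Wbar W blk xs + L lams + L zs - Wbar W blk x - L lam - L z) + inner (z - zs) (L lam)"
      unfolding r vveq e2 by simp
    show ?thesis unfolding r1 e1
      by (simp add: inner_add_left inner_add_right inner_diff_left inner_diff_right W1 W2 W3 W4 L1 L2)
  qed
  have xS: "x \<in> S" unfolding x_def using closest_point_in_set[OF cl ne] .
  have xsS: "xs \<in> S" using xs_feas(1) S_def by simp
  have proj: "inner (x - xs) ((x - y) - (xs - ys)) \<le> 0"
  proof -
    have "inner (y - x) (xs - x) \<le> 0" unfolding x_def using closest_point_dot[OF cvx cl xsS] .
    moreover have "inner (ys - xs) (x - xs) \<le> 0" using closest_point_dot[OF cvx cl xS, of ys] xsP by simp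
    moreover have "inner (x - xs) ((x - y) - (xs - ys)) = inner (y - x) (xs - x) + inner (ys - xs) (x - xs)"
      by (simp add: inner_diff_left inner_diff_right inner_commute[of y x] inner_commute[of y xs] inner_commute[of ys x] inner_commute[of ys xs] inner_commute[of xs x])
    ultimately show ?thesis by linarith
  qed
  have mono: "inner (x - xs) (g - gs) \<ge> 0"
  proof -
    have "f xs \<ge> f x + inner g (xs - x)" using g xsS SD unfolding subdiff_def by blast
    moreover have "f x \<ge> f xs + inner gs (x - xs)" using gs xS SD unfolding subdiff_def by blast
    moreover have "inner (x - xs) (g - gs) = - inner g (xs - x) - inner gs (x - xs)"
      by (simp add: inner_diff_left inner_diff_right inner_commute[of x g] inner_commute[of xs g] inner_commute[of x gs] inner_commute[of xs gs])
    ultimately show ?thesis by linarith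
  qed
  have psd: "inner lam (L lam) \<ge> 0" unfolding L_def by (rule Lpsd) (rule sym, rule nonneg)
  have "r \<le> - inner (x - xs) (g - gs) - inner lam (L lam) \<and> - inner (x - xs) (g - gs) - inner lam (L lam) \<le> 0"
    using req proj mono psd by linarith
  then show ?thesis
    using g gs unfolding S_def D_def f_def x_def L_def by (intro bexI[of _ g] bexI[of _ gs])
qed

end
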